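(* Let $c\in[\frac12,1)$ and let $d,\delta$ be positive integers with $d\ge\delta$. Let $G$ be a graph with maximum degree $\delta$ and $w:V(G)\to[0,1]$ a weight function with $w(V(G))=1$, and assume $G$ has no $d$-bounded $(w,c)$-balanced separator. Let $u,v\in V(G)$ with $u\in A_v$. Then either $u$ and $v$ are star twins, or $B_v\cup C_v\subseteq B_u\cup C_u$.
   Context: For $X\subseteq V(G)$, $w(X)=\sum_{x\in X}w(x)$; $N[v]=N(v)\cup\{v\}$; $N^d[v]$ is the set of vertices at distance at most $d$ from $v$. A set $X$ is $d$-bounded if $X\subseteq N^d[v]$ for some $v$. $X$ is a $(w,c)$-balanced separator if every connected component $D$ of $G\setminus X$ has $w(D)\le c$. For $v\in V(G)$, the canonical star separation $S_v=(A_v,C_v,B_v)$ is: $B_v$ the (under these assumptions unique) largest-weight connected component of $G\setminus N[v]$, $C_v$ the set consisting of $v$ and every vertex of $N(v)$ with a neighbor in $B_v$, and $A_v=V(G)\setminus(B_v\cup C_v)$. Two vertices $u,v$ are star twins if $B_u=B_v$, $C_u\setminus\{u\}=C_v\setminus\{v\}$ and $A_u\setminus\{v\}=A_v\setminus\{u\}$. *)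

theory Defs
  imports Complex_Main
begin

definition graph :: "'a set \<Rightarrow> ('a \<Rightarrow> 'a \<Rightarrow> bool) \<Rightarrow> bool" where
  "graph V E \<longleftrightarrow> finite V \<and> (\<forall>x y. E x y \<longrightarrow> x \<in> V \<and> y \<in> V)
     \<and> (\<forall>x y. E x y \<longrightarrow> E y x) \<and> (\<forall>x. \<not> E x x)"

definition nbhd :: "('a \<Rightarrow> 'a \<Rightarrow> bool) \<Rightarrow> 'a \<Rightarrow> 'a set" where
  "nbhd E v = {u. E v u}"

definition cnbhd :: "('a \<Rightarrow> 'a \<Rightarrow> bool) \<Rightarrow> 'a \<Rightarrow> 'a set" where
  "cnbhd E v = insert v (nbhd E v)"

definition max_degree :: "'a set \<Rightarrow> ('a \<Rightarrow> 'a \<Rightarrow> bool) \<Rightarrow> nat" where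
  "max_degree V E = Max ((\<lambda>v. card (nbhd E v)) ` V)"

definition dball :: "'a set \<Rightarrow> ('a \<Rightarrow> 'a \<Rightarrow> bool) \<Rightarrow> nat \<Rightarrow> 'a \<Rightarrow> 'a set" where
  "dball V E d v = {u \<in> V. \<exists>k\<le>d. (E ^^ k) v u}"

definition d_bounded :: "'a set \<Rightarrow> ('a \<Rightarrow> 'a \<Rightarrow> bool) \<Rightarrow> nat \<Rightarrow> 'a set \<Rightarrow> bool" where
  "d_bounded V E d X \<longleftrightarrow> (\<exists>v\<in>V. X \<subseteq> dball V E d v)"

definition restr :: "('a \<Rightarrow> 'a \<Rightarrow> bool) \<Rightarrow> 'a set \<Rightarrow> 'a \<Rightarrow> 'a \<Rightarrow> bool" where
  "restr E S x y \<longleftrightarrow> E x y \<and> x \<in> S \<and> y \<in> S"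

definition components :: "'a set \<Rightarrow> ('a \<Rightarrow> 'a \<Rightarrow> bool) \<Rightarrow> 'a set \<Rightarrow> 'a set set" where
  "components V E X = {D. \<exists>x \<in> V - X. D = {y. (restr E (V - X))\<^sup>*\<^sup>* x y}}"

definition balanced_sep :: "'a set \<Rightarrow> ('a \<Rightarrow> 'a \<Rightarrow> bool) \<Rightarrow> ('a \<Rightarrow> real) \<Rightarrow> real \<Rightarrow> 'a set \<Rightarrow> bool" where
  "balanced_sep V E w c X \<longleftrightarrow> (\<forall>D \<in> components V E X. sum w D \<le> c)"

definition starB :: "'a set \<Rightarrow> ('a \<Rightarrow> 'a \<Rightarrow> bool) \<Rightarrow> ('a \<Rightarrow> real) \<Rightarrow> 'a \<Rightarrow> 'a set" where
  "starB V E w v = (THE D. D \<in> components V E (cnbhd E v)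
       \<and> (\<forall>D' \<in> components V E (cnbhd E v). sum w D' \<le> sum w D))"

definition starC :: "'a set \<Rightarrow> ('a \<Rightarrow> 'a \<Rightarrow> bool) \<Rightarrow> ('a \<Rightarrow> real) \<Rightarrow> 'a \<Rightarrow> 'a set" where
  "starC V E w v = insert v {u \<in> nbhd E v. \<exists>b \<in> starB V E w v. E u b}"

definition starA :: "'a set \<Rightarrow> ('a \<Rightarrow> 'a \<Rightarrow> bool) \<Rightarrow> ('a \<Rightarrow> real) \<Rightarrow> 'a \<Rightarrow> 'a set" where
  "starA V E w v = V - (starB V E w v \<union> starC V E w v)"

definition star_twins :: "'a set \<Rightarrow> ('a \<Rightarrow> 'a \<Rightarrow> bool) \<Rightarrow> ('a \<Rightarrow> real) \<Rightarrow> 'a \<Rightarrow> 'a \<Rightarrow> bool" where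
  "star_twins V E w u v \<longleftrightarrow> starB V E w u = starB V E w v
     \<and> starC V E w u - {u} = starC V E w v - {v}
     \<and> starA V E w u - {v} = starA V E w v - {u}"

end

theory Submission
  imports Defs
begin

lemma comp_sub:
  assumes "D \<in> components V E X" shows "D \<subseteq> V - X"
proof
  fix y assume y: "y \<in> D"
  from assms obtain x where x: "x \<in> V - X" and D: "D = {y. (restr E (V - X))\<^sup>*\<^sup>* x y}"
    unfolding components_def by blast
  from y D have "(restr E (V - X))\<^sup>*\<^sup>* x y" by blast
  then show "y \<in> V - X"
    by (induct rule: rtranclp_induct) (use x in \<open>auto simp: restr_def\<close>)
qed

lemma comp_mem: "x \<in> V - X \<Longrightarrow> {y. (restr E (V - X))\<^sup>*\<^sup>* x y} \<in> components V E X"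
  unfolding components_def by blast

lemma restr_sym_rt:
  assumes "graph V E" and "(restr E S)\<^sup>*\<^sup>* x y" shows "(restr E S)\<^sup>*\<^sup>* y x"
  using assms(2)
proof (induct rule: rtranclp_induct)
  case base then show ?case by simp
next
  case (step y z)
  have "restr E S z y" using step(2) assms(1) unfolding restr_def graph_def by blast
  then show ?case using step(3) by (meson converse_rtranclp_into_rtranclp)
qed

lemma comp_rep:
  assumes "graph V E" "D \<in> components V E X" "y \<in> D"
  shows "D = {z. (restr E (V - X))\<^sup>*\<^sup>* y z}"
proof -
  from assms(2) obtain x where D: "D = {y. (restr E (V - X))\<^sup>*\<^sup>* x y}"
    unfolding components_def by blast
  with assms(3) have xy: "(restr E (V - X))\<^sup>*\<^sup>* x y" by blast
  with assms(1) have yx: "(restr E (V - X))\<^sup>*\<^sup>* y x" by (rule restr_sym_rt)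
  show ?thesis unfolding D using xy yx by (auto intro: rtranclp_trans)
qed

lemma comp_disj:
  assumes "graph V E" "D1 \<in> components V E X" "D2 \<in> components V E X" "D1 \<noteq> D2"
  shows "D1 \<inter> D2 = {}"
proof (rule ccontr)
  assume "D1 \<inter> D2 \<noteq> {}"
  then obtain z where "z \<in> D1" "z \<in> D2" by blast
  then show False using comp_rep[OF assms(1,2)] comp_rep[OF assms(1,3)] assms(4) by metis
qed

lemma weight_two:
  fixes w :: "'a \<Rightarrow> real"
  assumes "graph V E" "\<forall>x\<in>V. 0 \<le> w x \<and> w x \<le> 1" "sum w V = 1"
    "D1 \<subseteq> V" "D2 \<subseteq> V" "D1 \<inter> D2 = {}"
  shows "sum w D1 + sum w D2 \<le> 1"
proof -
  have fin: "finite V" using assms(1) unfolding graph_def by blast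
  have f1: "finite D1" "finite D2" using fin assms(4,5) finite_subset by auto
  have "sum w D1 + sum w D2 = sum w (D1 \<union> D2)"
    using sum.union_disjoint[OF f1 assms(6)] by metis
  also have "\<dots> \<le> sum w V"
    by (rule sum_mono2) (use fin assms(2,4,5) in auto)
  finally show ?thesis using assms(3) by simp
qed

lemma weight_half:
  fixes w :: "'a \<Rightarrow> real"
  assumes "graph V E" "\<forall>x\<in>V. 0 \<le> w x \<and> w x \<le> 1" "sum w V = 1"
    "D1 \<in> components V E X" "D2 \<in> components V E X"
    "sum w D1 > 1/2" "sum w D2 > 1/2"
  shows "D1 = D2"
proof (rule ccontr)
  assume "D1 \<noteq> D2"
  then have "D1 \<inter> D2 = {}" using comp_disj assms by metis
  moreover have "D1 \<subseteq> V" "D2 \<subseteq> V" using comp_sub assms(4,5) by blast+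
  ultimately have "sum w D1 + sum w D2 \<le> 1" using weight_two assms(1,2,3) by metis
  then show False using assms(6,7) by simp
qed

lemma cnbhd_sub: "graph V E \<Longrightarrow> v \<in> V \<Longrightarrow> cnbhd E v \<subseteq> V"
  unfolding cnbhd_def nbhd_def graph_def by blast

lemma starB_props:
  assumes "graph V E" "1/2 \<le> c" "0 < d"
    "\<forall>x\<in>V. 0 \<le> w x \<and> w x \<le> 1" "sum w V = 1"
    "\<not> (\<exists>X. X \<subseteq> V \<and> d_bounded V E d X \<and> balanced_sep V E w c X)"
    "v \<in> V"
  shows "starB V E w v \<in> components V E (cnbhd E v) \<and> sum w (starB V E w v) > 1/2"
proof -
  let ?X = "cnbhd E v"
  have sub: "?X \<subseteq> V" using cnbhd_sub assms(1,7) .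
  have "?X \<subseteq> dball V E d v"
  proof
    fix u assume u: "u \<in> ?X"
    show "u \<in> dball V E d v"
    proof (cases "u = v")
      case True
      then show ?thesis using assms(7) unfolding dball_def by force
    next
      case False
      then have "E v u" using u unfolding cnbhd_def nbhd_def by auto
      then have "(E ^^ 1) v u" by auto
      moreover have "u \<in> V" using u sub by blast
      ultimately show ?thesis using assms(3) unfolding dball_def
        by (metis (mono_tags, lifting) One_nat_def Suc_leI mem_Collect_eq)
    qed
  qed
  then have "d_bounded V E d ?X" using assms(7) unfolding d_bounded_def by blast
  then have "\<not> balanced_sep V E w c ?X" using assms(6) sub by blast
  then obtain D0 where D0: "D0 \<in> components V E ?X" "sum w D0 > c"
    unfolding balanced_sep_def by force
  have h0: "sum w D0 > 1/2" using D0(2) assms(2) by simp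
  have "starB V E w v = D0"
    unfolding starB_def
  proof (rule the_equality)
    show "D0 \<in> components V E ?X \<and> (\<forall>D'\<in>components V E ?X. sum w D' \<le> sum w D0)"
    proof (intro conjI ballI)
      show "D0 \<in> components V E ?X" by (rule D0(1))
    next
      fix D' assume D': "D' \<in> components V E ?X"
      show "sum w D' \<le> sum w D0"
      proof (cases "D' = D0")
        case False
        then have "D' \<inter> D0 = {}" using comp_disj assms(1) D' D0(1) by metis
        moreover have "D' \<subseteq> V" "D0 \<subseteq> V" using comp_sub D' D0(1) by blast+
        ultimately have "sum w D' + sum w D0 \<le> 1" using weight_two assms(1,4,5) by metis
        then show ?thesis using h0 by simp
      qed simp
    qed
  next
    fix D assume D: "D \<in> components V E ?X \<and> (\<forall>D'\<in>components V E ?X. sum w D' \<le> sum w D)"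
    then have "sum w D > 1/2" using h0 D0(1) by fastforce
    then show "D = D0" using weight_half[OF assms(1,4,5)] D D0(1) h0 by blast
  qed
  then show ?thesis using D0(1) h0 by simp
qed

lemma half:
  assumes "graph V E" "1/2 \<le> c" "0 < d"
    "\<forall>x\<in>V. 0 \<le> w x \<and> w x \<le> 1" "sum w V = 1"
    "\<not> (\<exists>X. X \<subseteq> V \<and> d_bounded V E d X \<and> balanced_sep V E w c X)"
    "u \<in> V" "v \<in> V" "u \<in> starA V E w v"
  shows "starB V E w v \<subseteq> starB V E w u \<and> starC V E w v - {v} \<subseteq> starB V E w u \<union> starC V E w u"
proof -
  let ?Bv = "starB V E w v" and ?Bu = "starB V E w u"
  let ?Rv = "restr E (V - cnbhd E v)" and ?Ru = "restr E (V - cnbhd E u)"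
  have Bv: "?Bv \<in> components V E (cnbhd E v)" "sum w ?Bv > 1/2"
    using starB_props[OF assms(1-6,8)] by auto
  have Bu: "?Bu \<in> components V E (cnbhd E u)" "sum w ?Bu > 1/2"
    using starB_props[OF assms(1-6,7)] by auto
  have uA: "u \<notin> ?Bv" "u \<notin> starC V E w v" using assms(9) unfolding starA_def by auto
  have Bvsub: "?Bv \<subseteq> V - cnbhd E v" using comp_sub Bv(1) by blast
  have Busub: "?Bu \<subseteq> V - cnbhd E u" using comp_sub Bu(1) by blast
  have disj: "?Bv \<inter> cnbhd E u = {}"
  proof (rule ccontr)
    assume "?Bv \<inter> cnbhd E u \<noteq> {}"
    then obtain y where y: "y \<in> ?Bv" "y = u \<or> E u y" unfolding cnbhd_def nbhd_def by auto
    with uA have Euy: "E u y" by auto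
    show False
    proof (cases "u \<in> cnbhd E v")
      case True
      then have "u \<noteq> v \<Longrightarrow> E v u" unfolding cnbhd_def nbhd_def by auto
      then have "u \<in> starC V E w v" unfolding starC_def nbhd_def using y(1) Euy by auto
      then show False using uA by blast
    next
      case False
      have "?Rv y u" using Euy y(1) Bvsub False assms(1,7) unfolding restr_def graph_def by blast
      then have "u \<in> {z. ?Rv\<^sup>*\<^sup>* y z}" by auto
      then show False using comp_rep[OF assms(1) Bv(1) y(1)] uA(1) by blast
    qed
  qed
  obtain b where b: "b \<in> ?Bv"
  proof -
    have "?Bv \<noteq> {}" using Bv(2) by auto
    then show ?thesis using that by blast
  qed
  have bV: "b \<in> V - cnbhd E u" using b Bvsub disj by blast
  have "?Bv = {z. ?Rv\<^sup>*\<^sup>* b z}" using comp_rep[OF assms(1) Bv(1) b] .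
  have step: "?Rv\<^sup>*\<^sup>* b z \<Longrightarrow> ?Ru\<^sup>*\<^sup>* b z" for z
  proof (induct rule: rtranclp_induct)
    case base then show ?case by simp
  next
    case (step y z)
    have "y \<in> ?Bv" "z \<in> ?Bv" using comp_rep[OF assms(1) Bv(1) b] step(1,2)
      by (auto intro: rtranclp.rtrancl_into_rtrancl)
    then have "?Ru y z" using step(2) disj Bvsub unfolding restr_def by blast
    then show ?case using step(3) by (meson rtranclp.rtrancl_into_rtrancl)
  qed
  let ?D = "{z. ?Ru\<^sup>*\<^sup>* b z}"
  have D: "?D \<in> components V E (cnbhd E u)" using comp_mem bV by metis
  have BvD: "?Bv \<subseteq> ?D" using comp_rep[OF assms(1) Bv(1) b] step by blast
  have fin: "finite V" using assms(1) unfolding graph_def by blast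
  have "sum w ?Bv \<le> sum w ?D"
  proof (rule sum_mono2)
    show "finite ?D" using fin comp_sub[OF D] finite_subset by blast
  qed (use comp_sub[OF D] BvD assms(4) in auto)
  then have "?D = ?Bu" using weight_half[OF assms(1,4,5) D Bu(1)] Bv(2) Bu(2) by linarith
  then have BB: "?Bv \<subseteq> ?Bu" using BvD by blast
  have "starC V E w v - {v} \<subseteq> ?Bu \<union> starC V E w u"
  proof
    fix x assume x: "x \<in> starC V E w v - {v}"
    then obtain bb where bb: "E v x" "bb \<in> ?Bv" "E x bb" unfolding starC_def nbhd_def by auto
    have xu: "x \<noteq> u" using x uA(2) by blast
    have bbu: "bb \<in> ?Bu" using bb(2) BB by blast
    show "x \<in> ?Bu \<union> starC V E w u"
    proof (cases "x \<in> cnbhd E u")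
      case True
      then have "E u x" using xu unfolding cnbhd_def nbhd_def by auto
      then show ?thesis using bbu bb(3) unfolding starC_def nbhd_def by auto
    next
      case False
      have "?Ru bb x" using bb(3) bbu Busub False assms(1) unfolding restr_def graph_def by blast
      then have "x \<in> {z. ?Ru\<^sup>*\<^sup>* bb z}" by auto
      then show ?thesis using comp_rep[OF assms(1) Bu(1) bbu] by blast
    qed
  qed
  then show ?thesis using BB by blast
qed

theorem lemma4p2:
  fixes V :: "'a set" and E :: "'a \<Rightarrow> 'a \<Rightarrow> bool" and w :: "'a \<Rightarrow> real"
    and c :: real and d \<delta> :: nat and u v :: 'a
  assumes "graph V E"
    and "1/2 \<le> c" and "c < 1"
    and "0 < d" and "0 < \<delta>" and "\<delta> \<le> d"
    and "max_degree V E = \<delta>"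
    and "\<forall>x\<in>V. 0 \<le> w x \<and> w x \<le> 1"
    and "sum w V = 1"
    and "\<not> (\<exists>X. X \<subseteq> V \<and> d_bounded V E d X \<and> balanced_sep V E w c X)"
    and "u \<in> V" and "v \<in> V"
    and "u \<in> starA V E w v"
  shows "star_twins V E w u v \<or>
         starB V E w v \<union> starC V E w v \<subseteq> starB V E w u \<union> starC V E w u"
proof (cases "v \<in> starB V E w u \<union> starC V E w u")
  case True
  then show ?thesis using half[OF assms(1,2,4,8,9,10,11,12,13)] by blast
next
  case False
  then have vA: "v \<in> starA V E w u" using assms(12) unfolding starA_def by blast
  have h1: "starB V E w v \<subseteq> starB V E w u \<and> starC V E w v - {v} \<subseteq> starB V E w u \<union> starC V E w u"
    using half[OF assms(1,2,4,8,9,10,11,12,13)] .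
  have h2: "starB V E w u \<subseteq> starB V E w v \<and> starC V E w u - {u} \<subseteq> starB V E w v \<union> starC V E w v"
    using half[OF assms(1,2,4,8,9,10,12,11) vA] .
  have BB: "starB V E w u = starB V E w v" using h1 h2 by blast
  have Bu: "starB V E w u \<in> components V E (cnbhd E u)"
    using starB_props[OF assms(1,2,4,8,9,10,11)] by auto
  have Bv: "starB V E w v \<in> components V E (cnbhd E v)"
    using starB_props[OF assms(1,2,4,8,9,10,12)] by auto
  have Cu: "starC V E w u \<subseteq> cnbhd E u" unfolding starC_def cnbhd_def by auto
  have Cv: "starC V E w v \<subseteq> cnbhd E v" unfolding starC_def cnbhd_def by auto
  have dBu: "starB V E w u \<inter> starC V E w u = {}" using comp_sub[OF Bu] Cu by blast
  have dBv: "starB V E w v \<inter> starC V E w v = {}" using comp_sub[OF Bv] Cv by blast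
  have uCv: "u \<notin> starC V E w v" and vCu: "v \<notin> starC V E w u"
    using assms(13) vA unfolding starA_def by auto
  have CC: "starC V E w u - {u} = starC V E w v - {v}"
    using h1 h2 BB dBu dBv uCv vCu by blast
  have "u \<in> starC V E w u" "v \<in> starC V E w v" unfolding starC_def by auto
  then have "starA V E w u - {v} = starA V E w v - {u}"
    unfolding starA_def using BB CC by blast
  then show ?thesis unfolding star_twins_def using BB CC by blast
qed

end
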